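(* Let $\mathbb{E}$ be the free $\mathbb{C}[\theta]$-module of rank $6$ with basis $\omega_1,\dots,\omega_6$ and connection determined by $$\theta\nabla_{\partial_\theta}\omega_j=d_j\,\omega_j-\theta^{-1}\omega_{j+1}\ (1\le j\le5),\qquad\theta\nabla_{\partial_\theta}\omega_6=d_6\,\omega_6,\qquad (d_1,\dots,d_6)=(2,1,2,3,4,3).$$ (This is the logarithmic Brieskorn lattice $G_0(h^{\star_3})$ of the linear free divisor $h^{\star_3}=(ae-bd)(af-cd)(bf-ce)$ on $\mathbb{C}^6$ with coordinates $a,b,c,d,e,f$, the discriminant of the star quiver with three exterior vertices, whose Bernstein polynomial is $(s+\frac43)(s+1)^4(s+\frac23)$.) Then $\mathbb{E}$ is regular singular at $\theta=0$ and its spectrum at $\theta=0$ is $$\mathrm{Sp}(\mathbb{E},\nabla)=(-2,1,2,3,4,7),$$ i.e. the multiset $\{-2,1,2,3,4,7\}$.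
   Context: Spectrum at $\theta=0$: let $(\mathbb{E},\nabla)$ be a free $\mathbb{C}[\theta]$-module of finite rank with a connection having a pole of order at most two at $\theta=0$, regular singular there, such that $\mathbb{M}=\mathbb{E}\otimes\mathbb{C}[\theta,\theta^{-1}]$ has quasi-unipotent monodromy. Let $V^\bullet\mathbb{M}$ be the canonical (Kashiwara–Malgrange) $V$-filtration at $\theta=0$, indexed by $\mathbb{Q}$ and written decreasingly: $V^\alpha\mathbb{M}$ is the (germ at $0$ of the) lattice generated over $\mathbb{C}\{\theta\}$ by the elementary sections $s$ with $(\theta\nabla_{\partial_\theta}-\beta)^Ns=0$ for some $N$ and some $\beta\ge\alpha$. Put $V^{>\alpha}\mathbb{M}=\bigcup_{\beta>\alpha}V^\beta\mathbb{M}$. Then $\mathrm{Sp}(\mathbb{E},\nabla)=\sum_{\alpha\in\mathbb{Q}}\dim_{\mathbb{C}}\Big(\frac{V^\alpha\mathbb{M}\cap\mathbb{E}}{V^\alpha\mathbb{M}\cap\theta\mathbb{E}+V^{>\alpha}\mathbb{M}\cap\mathbb{E}}\Big)\cdot\alpha\in\mathbb{Z}[\mathbb{Q}]$, written as the multiset of the $\alpha$'s. *)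

theory Defs
  imports "HOL-Analysis.Analysis" "HOL-Computational_Algebra.Formal_Laurent_Series"
begin

text \<open>Vectors of rank n are modelled as maps nat to complex Laurent series, with
 components of index at least n equal to zero; component i is the coefficient of the
 (i+1)-st basis vector. The germ at theta=0 of M is the space of vectors whose
 components are convergent Laurent series (meromorphic germs).\<close>

type_synonym vec = "nat \<Rightarrow> complex fls"

definition conv_fls :: "complex fls \<Rightarrow> bool" where
  "conv_fls f \<longleftrightarrow> fps_conv_radius (fls_base_factor_to_fps f) > 0"

definition conv_ps :: "complex fls \<Rightarrow> bool" where
  "conv_ps f \<longleftrightarrow> conv_fls f \<and> (\<forall>k<0. fls_nth f k = 0)"

definition poly_fls :: "complex fls \<Rightarrow> bool" where
  "poly_fls f \<longleftrightarrow> (\<forall>k<0. fls_nth f k = 0) \<and> (\<exists>m. \<forall>k\<ge>m. fls_nth f k = 0)"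

definition smul :: "complex fls \<Rightarrow> vec \<Rightarrow> vec" where
  "smul f v = (\<lambda>i. f * v i)"

definition vsum :: "nat \<Rightarrow> (nat \<Rightarrow> complex fls) \<Rightarrow> (nat \<Rightarrow> vec) \<Rightarrow> vec" where
  "vsum m c s = (\<lambda>i. \<Sum>k<m. c k * s k i)"

definition Man :: "nat \<Rightarrow> vec set" where
  "Man n = {v. (\<forall>i\<ge>n. v i = 0) \<and> (\<forall>i. conv_fls (v i))}"

definition Emod :: "nat \<Rightarrow> vec set" where
  "Emod n = {v. (\<forall>i\<ge>n. v i = 0) \<and> (\<forall>i. poly_fls (v i))}"

definition thetaE :: "nat \<Rightarrow> vec set" where
  "thetaE n = smul fls_X ` Emod n"

text \<open>theta nabla_{d/dtheta} for the connection with matrix A: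
 theta nabla omega_j = sum_i A i j omega_i\<close>
definition thetaNabla :: "nat \<Rightarrow> (nat \<Rightarrow> nat \<Rightarrow> complex fls) \<Rightarrow> vec \<Rightarrow> vec" where
  "thetaNabla n A v = (\<lambda>i. if i < n then fls_X * fls_deriv (v i) + (\<Sum>j<n. A i j * v j) else 0)"

definition regular_singular :: "nat \<Rightarrow> (nat \<Rightarrow> nat \<Rightarrow> complex fls) \<Rightarrow> bool" where
  "regular_singular n A \<longleftrightarrow>
     (\<exists>m g. (\<forall>k<m. g k \<in> Man n) \<and>
        (let L = {vsum m c g | c. \<forall>k<m. conv_ps (c k)} in
          (\<forall>v\<in>L. thetaNabla n A v \<in> L) \<and>
          (\<forall>v\<in>Man n. \<exists>p::nat. smul (fls_X ^ p) v \<in> L)))"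

definition elementary :: "nat \<Rightarrow> (nat \<Rightarrow> nat \<Rightarrow> complex fls) \<Rightarrow> rat \<Rightarrow> vec \<Rightarrow> bool" where
  "elementary n A \<beta> s \<longleftrightarrow> s \<in> Man n \<and>
     (\<exists>N. ((\<lambda>v. (\<lambda>i. thetaNabla n A v i - fls_const (of_rat \<beta>) * v i)) ^^ N) s = (\<lambda>i. 0))"

definition Vfilt :: "nat \<Rightarrow> (nat \<Rightarrow> nat \<Rightarrow> complex fls) \<Rightarrow> rat \<Rightarrow> vec set" where
  "Vfilt n A \<alpha> = {vsum m c s | m c s. \<forall>k<m. conv_ps (c k) \<and>
                      (\<exists>\<beta>\<ge>\<alpha>. elementary n A \<beta> (s k))}"

definition Vgt :: "nat \<Rightarrow> (nat \<Rightarrow> nat \<Rightarrow> complex fls) \<Rightarrow> rat \<Rightarrow> vec set" where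
  "Vgt n A \<alpha> = (\<Union>\<beta>\<in>{\<beta>. \<beta> > \<alpha>}. Vfilt n A \<beta>)"

text \<open>dim_C (X / Y) = d, for complex subspaces Y of X (scalars act via fls_const)\<close>
definition quot_dim :: "vec set \<Rightarrow> vec set \<Rightarrow> nat \<Rightarrow> bool" where
  "quot_dim X Y d \<longleftrightarrow> (\<exists>S::vec list. length S = d \<and> set S \<subseteq> X \<and>
      (\<forall>c::nat \<Rightarrow> complex. vsum d (\<lambda>k. fls_const (c k)) (\<lambda>k. S ! k) \<in> Y \<longrightarrow> (\<forall>k<d. c k = 0)) \<and>
      (\<forall>x\<in>X. \<exists>c::nat \<Rightarrow> complex. (\<lambda>i. x i - vsum d (\<lambda>k. fls_const (c k)) (\<lambda>k. S ! k) i) \<in> Y))"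

definition spectrum_mult :: "nat \<Rightarrow> (nat \<Rightarrow> nat \<Rightarrow> complex fls) \<Rightarrow> rat \<Rightarrow> nat \<Rightarrow> bool" where
  "spectrum_mult n A \<alpha> d \<longleftrightarrow>
     quot_dim (Vfilt n A \<alpha> \<inter> Emod n)
       {(\<lambda>i. x i + y i) | x y. x \<in> Vfilt n A \<alpha> \<inter> thetaE n \<and> y \<in> Vgt n A \<alpha> \<inter> Emod n} d"

text \<open>The example: d = (2,1,2,3,4,3), 0-indexed basis omega_0..omega_5,
 theta nabla omega_j = d_j omega_j - theta^-1 omega_{j+1}\<close>
definition dvals :: "nat \<Rightarrow> complex" where
  "dvals j = [2,1,2,3,4,3] ! j"

definition Astar :: "nat \<Rightarrow> nat \<Rightarrow> complex fls" where
  "Astar i j = (if i < 6 \<and> j < 6 then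
                  (if i = j then fls_const (dvals j)
                   else if i = j + 1 then - fls_X_inv else 0)
                else 0)"

end

theory Submission
  imports Defs
begin

lemma nth_X_mult [simp]: "fls_nth (fls_X * (f::complex fls)) i = fls_nth f (i - 1)"
  unfolding fls_X_times_conv_shift(1) by simp
lemma nth_Xp_mult [simp]: "fls_nth (fls_X ^ n * (f::complex fls)) i = fls_nth f (i - int n)"
  by (simp add: fls_X_power_times_conv_shift)
lemma nth_Xinv_mult [simp]: "fls_nth (fls_X_inv * (f::complex fls)) i = fls_nth f (i + 1)"
  unfolding fls_X_inv_times_conv_shift(1) by simp
lemma fls_sum_nth: "fls_nth (\<Sum>t\<in>S. f t) i = (\<Sum>t\<in>S. fls_nth (f t) i)"
  by (induction S rule: infinite_finite_induct) auto
lemma nth_X_deriv [simp]: "fls_nth (fls_X * fls_deriv (f::complex fls)) i = of_int i * fls_nth f i"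
  by simp

definition vb :: "complex fls \<Rightarrow> rat \<Rightarrow> bool" where
  "vb f A \<longleftrightarrow> (\<forall>i. of_int i < A \<longrightarrow> fls_nth f i = 0)"

lemma vb_mono: "vb f A \<Longrightarrow> B \<le> A \<Longrightarrow> vb f B"
  unfolding vb_def by auto
lemma vb_0 [simp]: "vb 0 A" unfolding vb_def by simp
lemma vb_add: "vb f A \<Longrightarrow> vb g A \<Longrightarrow> vb (f + g) A"
  unfolding vb_def by auto
lemma vb_diff: "vb f A \<Longrightarrow> vb g A \<Longrightarrow> vb (f - g) A"
  unfolding vb_def by auto
lemma vb_uminus: "vb f A \<Longrightarrow> vb (- f) A"
  unfolding vb_def by auto
lemma vb_sum: "(\<And>t. t \<in> S \<Longrightarrow> vb (f t) A) \<Longrightarrow> vb (\<Sum>t\<in>S. f t) A"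
  unfolding vb_def by (auto simp: fls_sum_nth intro!: sum.neutral)

lemma vb_subdeg: assumes "vb f A" "f \<noteq> 0" shows "A \<le> of_int (fls_subdegree f)"
proof (rule ccontr)
  assume "\<not> ?thesis"
  hence "of_int (fls_subdegree f) < A" by simp
  with assms(1) have "fls_nth f (fls_subdegree f) = 0" unfolding vb_def by auto
  with assms(2) show False by simp
qed

lemma vb_mult: assumes "vb f A" "vb g B" shows "vb (f * g) (A + B)"
proof (cases "f = 0 \<or> g = 0")
  case True thus ?thesis by auto
next
  case False
  have 1: "A \<le> of_int (fls_subdegree f)" "B \<le> of_int (fls_subdegree g)"
    using vb_subdeg assms False by auto
  show ?thesis unfolding vb_def
  proof (intro allI impI)
    fix i assume "of_int i < A + B"
    with 1 have "of_int i < (of_int (fls_subdegree f + fls_subdegree g) :: rat)" by simp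
    hence "i < fls_subdegree f + fls_subdegree g" by linarith
    thus "fls_nth (f * g) i = 0" by (rule fls_times_nth_eq0)
  qed
qed

lemma vb_Xp: "vb f A \<Longrightarrow> vb (fls_X ^ n * f) (A + of_nat n)"
  unfolding vb_def by auto
lemma vb_Xp_inv: "vb (fls_X ^ n * f) A \<Longrightarrow> vb f (A - of_nat n)"
  unfolding vb_def
proof (intro allI impI)
  fix i assume a: "\<forall>i. of_int i < A \<longrightarrow> fls_nth (fls_X ^ n * f) i = 0" and "of_int i < A - of_nat n"
  hence "of_int (i + int n) < A" by simp
  with a have "fls_nth (fls_X ^ n * f) (i + int n) = 0" by blast
  thus "fls_nth f i = 0" by simp
qed
lemma vb_const: "fls_nth f 0 = 0 \<or> A \<le> 0 \<Longrightarrow> vb (fls_const (fls_nth f 0)) A" 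
  unfolding vb_def by auto
lemma vb_cmult: "vb f A \<Longrightarrow> vb (fls_const c * f) A"
  unfolding vb_def by (auto simp: fls_mult_const_nth)
lemma vb_numult: "vb f A \<Longrightarrow> vb ((numeral c) * f) A"
  using vb_cmult[of f A "numeral c"] by (simp add: fls_const_numeral)

definition crad :: "complex fls \<Rightarrow> int \<Rightarrow> ereal" where
  "crad f k = conv_radius (\<lambda>n. fls_nth f (int n + k))"

lemma crad_le: "a \<le> b \<Longrightarrow> crad f a = crad f b"
proof -
  assume "a \<le> b"
  define m where "m = nat (b - a)"
  have e: "\<And>n. int (n + m) + a = int n + b" using \<open>a \<le> b\<close> by (simp add: m_def)
  have "crad f a = conv_radius (\<lambda>n. (\<lambda>n. fls_nth f (int n + a)) (n + m))"
    unfolding crad_def by (rule conv_radius_shift[symmetric])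
  also have "\<dots> = crad f b" unfolding crad_def e ..
  finally show ?thesis .
qed

lemma crad_indep: "crad f a = crad f b"
  by (metis crad_le linorder_le_cases)

lemma conv_fls_crad: "conv_fls f \<longleftrightarrow> 0 < crad f 0"
proof -
  have "fps_conv_radius (fls_base_factor_to_fps f) = crad f (fls_subdegree f)"
    unfolding fps_conv_radius_def crad_def by (simp add: fls_base_factor_to_fps_nth add.commute)
  thus ?thesis unfolding conv_fls_def using crad_indep by metis
qed

definition fin_sup :: "complex fls \<Rightarrow> bool" where
  "fin_sup f \<longleftrightarrow> (\<exists>M. \<forall>i\<ge>M. fls_nth f i = 0)"

lemma fin_sup_conv: "fin_sup f \<Longrightarrow> conv_fls f"
proof -
  assume "fin_sup f"
  then obtain M where M: "\<forall>i\<ge>M. fls_nth f i = 0" unfolding fin_sup_def by auto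
  have "crad f 0 = conv_radius (\<lambda>_. 0::complex)"
    unfolding crad_def
    by (rule conv_radius_cong') (auto intro!: eventually_mono[OF eventually_ge_at_top[of "nat M"]] simp: M)
  thus ?thesis by (simp add: conv_fls_crad)
qed

lemma conv_ps_iff: "conv_ps f \<longleftrightarrow> conv_fls f \<and> vb f 0"
  unfolding conv_ps_def vb_def by auto

lemma conv_add: "conv_fls f \<Longrightarrow> conv_fls g \<Longrightarrow> conv_fls (f + g)"
  unfolding conv_fls_crad crad_def
  using conv_radius_add_ge[of "\<lambda>n. fls_nth f (int n + 0)" "\<lambda>n. fls_nth g (int n + 0)"]
  by (auto simp: min_def split: if_splits)

lemma conv_zero [simp]: "conv_fls 0"
  by (rule fin_sup_conv) (simp add: fin_sup_def)

lemma conv_sum: "(\<And>t. t \<in> S \<Longrightarrow> conv_fls (f t)) \<Longrightarrow> conv_fls (\<Sum>t\<in>S. f t)"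
  by (induction S rule: infinite_finite_induct) (auto intro: conv_add)

lemma conv_cmult: "conv_fls f \<Longrightarrow> conv_fls (fls_const c * f)"
proof (cases "c = 0")
  case False
  assume "conv_fls f"
  thus ?thesis unfolding conv_fls_crad crad_def fls_mult_const_nth
    using conv_radius_cmult_left[OF False, of "\<lambda>n. fls_nth f (int n + 0)"] by simp
qed (simp add: fls_const_0)

lemma conv_Xp: "conv_fls f \<Longrightarrow> conv_fls (fls_X ^ m * f)"
proof -
  assume "conv_fls f"
  have "crad (fls_X ^ m * f) 0 = crad f (- int m)" unfolding crad_def by simp
  thus ?thesis using \<open>conv_fls f\<close> crad_indep unfolding conv_fls_crad by metis
qed

lemma conv_X_deriv: "conv_fls f \<Longrightarrow> conv_fls (fls_X * fls_deriv f)"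
proof -
  assume "conv_fls f"
  define A where "A = Abs_fps (\<lambda>n. fls_nth f (int n))"
  have "fps_conv_radius (fps_X * fps_deriv A) \<ge> min (fps_conv_radius fps_X) (fps_conv_radius (fps_deriv A))"
    using fps_conv_radius_mult[of fps_X "fps_deriv A"] by simp
  hence r: "fps_conv_radius (fps_X * fps_deriv A) \<ge> fps_conv_radius A"
    using fps_conv_radius_deriv[of A] by simp
  have "fps_conv_radius A = crad f 0" unfolding fps_conv_radius_def crad_def A_def by simp
  moreover have "fps_conv_radius (fps_X * fps_deriv A) = crad (fls_X * fls_deriv f) 0"
    unfolding fps_conv_radius_def crad_def A_def
    by (rule conv_radius_cong_weak) (auto simp: of_nat_diff)
  ultimately show ?thesis using \<open>conv_fls f\<close> r unfolding conv_fls_crad by (auto)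
qed

definition Qc :: "nat \<Rightarrow> nat \<Rightarrow> complex" where
  "Qc k j = (if k < 6 \<and> j < 6 then
     [[1,0,0,0,0,0],[1/2,1,0,0,0,0],[-1/4,0,1,0,0,0],[1/8,0,0,1,0,0],[-1/16,0,0,0,1,0],
      [1/64,1/16,1/8,1/4,1/2,1]] ! k ! j else 0)"
definition Pc :: "nat \<Rightarrow> nat \<Rightarrow> complex" where
  "Pc j k = (if k < 6 \<and> j < 6 then
     [[1,0,0,0,0,0],[-1/2,1,0,0,0,0],[1/4,0,1,0,0,0],[-1/8,0,0,1,0,0],[1/16,0,0,0,1,0],
      [-1/64,-1/16,-1/8,-1/4,-1/2,1]] ! j ! k else 0)"
definition NTc :: "nat \<Rightarrow> nat \<Rightarrow> complex" where
  "NTc k l = (if k < 6 \<and> l < 6 then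
     [[2,0,0,0,0,0],[0,0,0,0,0,0],[0,-1,0,0,0,0],[0,0,-1,0,0,0],[0,0,0,-1,0,0],
      [0,0,0,0,0,-2]] ! k ! l else 0)"
definition lam :: "nat \<Rightarrow> rat" where "lam k = [2,0,0,0,0,-2] ! k"

definition G :: "vec \<Rightarrow> nat \<Rightarrow> complex fls" where
  "G v k = (\<Sum>j<6. fls_const (Qc k j) * fls_X ^ j * v j)"

lemma G_nth: "fls_nth (G v k) i = (\<Sum>j<6. Qc k j * fls_nth (v j) (i - int j))"
  unfolding G_def fls_sum_nth by (simp add: mult.assoc fls_mult_const_nth)

lemma sum6: "(\<Sum>j<(6::nat). f j) = f 0 + f 1 + f 2 + f 3 + f 4 + (f 5 :: 'a::comm_monoid_add)"
  by (simp add: eval_nat_numeral)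
lemma sum5: "(\<Sum>j<(5::nat). f j) = f 0 + f 1 + f 2 + f 3 + (f 4 :: 'a::comm_monoid_add)"
  by (simp add: eval_nat_numeral)

lemma less6: "(k::nat) < 6 \<longleftrightarrow> k = 0 \<or> k = 1 \<or> k = 2 \<or> k = 3 \<or> k = 4 \<or> k = 5"
  by auto

lemma thetaNabla_nth:
  assumes "j < 6"
  shows "fls_nth (thetaNabla 6 Astar v j) i = of_int i * fls_nth (v j) i + dvals j * fls_nth (v j) i
          - (if j = 0 then 0 else fls_nth (v (j-1)) (i+1))"
  using assms unfolding less6
  by (auto simp: thetaNabla_def Astar_def fls_sum_nth sum6 eval_nat_numeral)

lemma coeff_ident:
  assumes "k < 6"
  shows "(\<Sum>j<6. Qc k j * ((a - of_nat j + dvals j - b) * x j)) - (\<Sum>j<5. Qc k (j+1) * x j)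
       = (a - b) * (\<Sum>j<6. Qc k j * x j) + (\<Sum>l<6. NTc k l * (\<Sum>j<6. Qc l j * x j))"
  using assms unfolding less6
  by (auto simp: sum6 sum5 Qc_def NTc_def dvals_def algebra_simps)

definition Fop :: "rat \<Rightarrow> vec \<Rightarrow> vec" where
  "Fop \<beta> v = (\<lambda>i. thetaNabla 6 Astar v i - fls_const (of_rat \<beta>) * v i)"

lemma G_F_nth:
  assumes "k < 6"
  shows "fls_nth (G (Fop \<beta> v) k) i = (of_int i - of_rat \<beta>) * fls_nth (G v k) i
          + (\<Sum>l<6. NTc k l * fls_nth (G v l) i)"
proof -
  define x where "x j = fls_nth (v j) (i - int j)" for j
  have 1: "fls_nth (Fop \<beta> v j) (i - int j) =
     (of_int i - of_nat j + dvals j - of_rat \<beta>) * x j - (if j = 0 then 0 else x (j - 1))" if "j < 6" for j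
  proof -
    have "j \<noteq> 0 \<Longrightarrow> i - int j + 1 = i - int (j - 1)" by simp
    thus ?thesis using that unfolding Fop_def x_def
      by (simp add: thetaNabla_nth fls_mult_const_nth algebra_simps)
  qed
  have "fls_nth (G (Fop \<beta> v) k) i = (\<Sum>j<6. Qc k j * ((of_int i - of_nat j + dvals j - of_rat \<beta>) * x j))
        - (\<Sum>j<6. Qc k j * (if j = 0 then 0 else x (j - 1)))"
    unfolding G_nth by (simp add: 1 right_diff_distrib sum_subtractf)
  also have "(\<Sum>j<6. Qc k j * (if j = 0 then 0 else x (j - 1))) = (\<Sum>j<5. Qc k (j+1) * x j)"
    by (simp add: sum6 sum5 eval_nat_numeral)
  also have "(\<Sum>j<6. Qc k j * ((of_int i - of_nat j + dvals j - of_rat \<beta>) * x j)) - (\<Sum>j<5. Qc k (j+1) * x j)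
     = (of_int i - of_rat \<beta>) * (\<Sum>j<6. Qc k j * x j) + (\<Sum>l<6. NTc k l * (\<Sum>j<6. Qc l j * x j))"
    by (rule coeff_ident[OF assms])
  finally show ?thesis unfolding G_nth x_def .
qed

lemma rat_ne_complex: "of_int i + (r::rat) \<noteq> \<beta> \<Longrightarrow> (of_int i - of_rat \<beta> + of_rat r :: complex) \<noteq> 0"
proof -
  assume a: "of_int i + r \<noteq> \<beta>"
  have "(of_int i - of_rat \<beta> + of_rat r :: complex) = of_rat (of_int i - \<beta> + r)"
    by (simp add: of_rat_add of_rat_diff)
  moreover have "of_int i - \<beta> + r \<noteq> 0" using a by auto
  ultimately show ?thesis by simp
qed

lemma lam_vals: "lam 0 = 2" "lam 1 = 0" "lam 2 = 0" "lam 3 = 0" "lam 4 = 0" "lam 5 = -2"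
  by (simp_all add: lam_def)

lemma elem_funpow: "elementary 6 Astar \<beta> s \<Longrightarrow> \<exists>N. (Fop \<beta> ^^ N) s = (\<lambda>i. 0)"
  unfolding elementary_def Fop_def by auto

lemma G_zero [simp]: "G (\<lambda>i. 0) k = 0"
  unfolding G_def by simp

lemma funpow_zero_G:
  "(Fop \<beta> ^^ N) s = (\<lambda>i. 0) \<Longrightarrow> k < 6 \<Longrightarrow> of_int i + lam k \<noteq> \<beta> \<Longrightarrow> fls_nth (G s k) i = 0"
proof (induction N arbitrary: s k)
  case 0 thus ?case by simp
next
  case (Suc N)
  have h: "(Fop \<beta> ^^ N) (Fop \<beta> s) = (\<lambda>i. 0)" using Suc.prems(1) by (metis comp_apply funpow_Suc_right)
  define x where "x k = fls_nth (G s k) i" for k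
  define y where "y k = fls_nth (G (Fop \<beta> s) k) i" for k
  define c where "c = (of_int i - of_rat \<beta> :: complex)"
  have IH: "k < 6 \<Longrightarrow> of_int i + lam k \<noteq> \<beta> \<Longrightarrow> y k = 0" for k using Suc.IH[OF h] unfolding y_def by blast
  have ye: "y 0 = (c + 2) * x 0" "y 1 = c * x 1" "y 2 = c * x 2 - x 1" "y 3 = c * x 3 - x 2"
      "y 4 = c * x 4 - x 3" "y 5 = (c - 2) * x 5"
    unfolding y_def x_def c_def
    by (simp_all add: G_F_nth sum6 NTc_def algebra_simps)
  have c0: "c + of_rat (lam k) \<noteq> 0" if "of_int i + lam k \<noteq> \<beta>" for k
    using rat_ne_complex[OF that] unfolding c_def .
  show ?case
  proof -
    have "k = 0 \<or> k = 5 \<or> (1 \<le> k \<and> k \<le> 4)" using Suc.prems(2) by auto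
    moreover
    { assume k: "k = 0"
      with c0[OF Suc.prems(3)] have "c + 2 \<noteq> 0" by (simp add: lam_vals)
      moreover have "y 0 = 0" using IH[of 0] Suc.prems k by simp
      ultimately have "x 0 = 0" using ye by simp }
    moreover
    { assume k: "k = 5"
      with c0[OF Suc.prems(3)] have "c - 2 \<noteq> 0" by (simp add: lam_vals)
      moreover have "y 5 = 0" using IH[of 5] Suc.prems k by simp
      ultimately have "x 5 = 0" using ye by simp }
    moreover
    { assume k: "1 \<le> k \<and> k \<le> 4"
      hence l: "lam k = 0" by (auto simp: lam_def eval_nat_numeral le_Suc_eq)
      have cn: "c \<noteq> 0" using c0[OF Suc.prems(3)] l by simp
      have yz: "y 1 = 0" "y 2 = 0" "y 3 = 0" "y 4 = 0"
        using IH[of 1] IH[of 2] IH[of 3] IH[of 4] Suc.prems(3) l by (simp_all add: lam_def)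
      have "x 1 = 0" using yz ye cn by simp
      moreover hence "x 2 = 0" using yz ye cn by simp
      moreover hence "x 3 = 0" using yz ye cn by simp
      moreover hence "x 4 = 0" using yz ye cn by simp
      ultimately have "x k = 0" using k by (auto simp: eval_nat_numeral le_Suc_eq) }
    ultimately show ?thesis unfolding x_def by blast
  qed
qed

lemma elem_G_vb:
  assumes "elementary 6 Astar \<beta> s" "k < 6"
  shows "vb (G s k) (\<beta> - lam k)"
proof -
  obtain N where "(Fop \<beta> ^^ N) s = (\<lambda>i. 0)" using elem_funpow[OF assms(1)] by auto
  thus ?thesis unfolding vb_def using funpow_zero_G assms(2) by force
qed

lemma G_vsum: "G (vsum m c s) k = (\<Sum>t<m. c t * G (s t) k)"
  unfolding G_def vsum_def
  by (simp add: sum_distrib_left sum_distrib_right mult.assoc mult.left_commute sum.swap[of _ "{..<m}"])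

definition Ccond :: "vec \<Rightarrow> rat \<Rightarrow> bool" where
  "Ccond v \<alpha> \<longleftrightarrow> (\<forall>k<6. vb (G v k) (\<alpha> - lam k))"

lemma V1: assumes "v \<in> Vfilt 6 Astar \<alpha>" shows "Ccond v \<alpha>"
proof -
  obtain m c s where v: "v = vsum m c s" and cs: "\<forall>k<m. conv_ps (c k) \<and> (\<exists>\<beta>\<ge>\<alpha>. elementary 6 Astar \<beta> (s k))"
    using assms unfolding Vfilt_def by auto
  show ?thesis unfolding Ccond_def
  proof (intro allI impI)
    fix k :: nat assume k: "k < 6"
    show "vb (G v k) (\<alpha> - lam k)" unfolding v G_vsum
    proof (rule vb_sum)
      fix t assume "t \<in> {..<m}"
      with cs obtain \<beta> where b: "\<beta> \<ge> \<alpha>" "elementary 6 Astar \<beta> (s t)" and cc: "conv_ps (c t)" by auto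
      have "vb (c t * G (s t) k) (0 + (\<beta> - lam k))"
        by (rule vb_mult) (use cc conv_ps_iff elem_G_vb[OF b(2) k] in auto)
      thus "vb (c t * G (s t) k) (\<alpha> - lam k)" by (rule vb_mono) (use b in simp)
    qed
  qed
qed

lemma G_diff: "G (\<lambda>j. v j - w j) k = G v k - G w k"
  unfolding G_def by (simp add: sum_subtractf algebra_simps)

lemma G_inj0:
  assumes "\<forall>j\<ge>6. d j = 0" "\<forall>k<6. G d k = 0"
  shows "d = (\<lambda>j. 0)"
proof -
  have z: "(\<Sum>j<6. Qc k j * fls_nth (d j) (i - int j)) = 0" if "k < 6" for k i
    using assms(2) that G_nth[of d k i] by simp
  have d0: "fls_nth (d 0) i = 0" for i using z[of 0 i] by (simp add: sum6 Qc_def)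
  have d1: "fls_nth (d 1) i = 0" for i using z[of 1 "i+1"] d0 by (simp add: sum6 Qc_def)
  have d2: "fls_nth (d 2) i = 0" for i using z[of 2 "i+2"] d0 by (simp add: sum6 Qc_def)
  have d3: "fls_nth (d 3) i = 0" for i using z[of 3 "i+3"] d0 by (simp add: sum6 Qc_def)
  have d4: "fls_nth (d 4) i = 0" for i using z[of 4 "i+4"] d0 by (simp add: sum6 Qc_def)
  have d5: "fls_nth (d 5) i = 0" for i using z[of 5 "i+5"] d0 d1 d2 d3 d4 by (simp add: sum6 Qc_def)
  show ?thesis
  proof
    fix j show "d j = 0"
    proof (cases "j < 6")
      case True
      then show ?thesis unfolding less6 using d0 d1 d2 d3 d4 d5 by (auto simp: fls_eq_iff)
    qed (use assms in auto)
  qed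
qed

lemma G_inj:
  assumes "\<forall>j\<ge>6. v j = 0" "\<forall>j\<ge>6. w j = 0" "\<forall>k<6. G v k = G w k"
  shows "v = w"
proof -
  have "(\<lambda>j. v j - w j) = (\<lambda>j. 0)"
  proof (rule G_inj0)
    show "\<forall>j\<ge>6. v j - w j = 0" using assms(1,2) by simp
    show "\<forall>k<6. G (\<lambda>j. v j - w j) k = 0" unfolding G_diff using assms(3) by simp
  qed
  show ?thesis
  proof
    fix j show "v j = w j" using fun_cong[OF \<open>(\<lambda>j. v j - w j) = (\<lambda>j. 0)\<close>, of j] by simp
  qed
qed

definition Tsec :: "nat \<Rightarrow> nat \<Rightarrow> vec" where
  "Tsec k n = (\<lambda>j. if j < 6 then fls_const (Pc j k) * fls_shift (int j - int n) 1 else 0)"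

lemma Tsec_nth: "fls_nth (Tsec k n j) i = (if j < 6 \<and> i = int n - int j then Pc j k else 0)"
  unfolding Tsec_def by (auto simp: fls_mult_const_nth)

lemma QP: "k < 6 \<Longrightarrow> k' < 6 \<Longrightarrow> (\<Sum>j<6. Qc k' j * Pc j k) = (if k' = k then 1 else 0)"
  unfolding less6 by (auto simp: sum6 Qc_def Pc_def)

lemma G_Tsec: assumes "k < 6" "k' < 6" shows "G (Tsec k n) k' = (if k' = k then fls_X ^ n else 0)"
proof (rule fls_eqI)
  fix i
  have "fls_nth (G (Tsec k n) k') i = (\<Sum>j<6. Qc k' j * (if i = int n then Pc j k else 0))"
    unfolding G_nth Tsec_nth by (intro sum.cong) auto
  also have "\<dots> = (if i = int n then (\<Sum>j<6. Qc k' j * Pc j k) else 0)" by auto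
  also have "\<dots> = fls_nth (if k' = k then fls_X ^ n else 0) i"
    using QP[OF assms] by auto
  finally show "fls_nth (G (Tsec k n) k') i = fls_nth (if k' = k then fls_X ^ n else 0) i" .
qed

lemma Tsec_high: "j \<ge> 6 \<Longrightarrow> Tsec k n j = 0" unfolding Tsec_def by simp

lemma Tsec_Man: "Tsec k n \<in> Man 6"
  unfolding Man_def
proof (safe)
  fix j show "conv_fls (Tsec k n j)"
    by (rule fin_sup_conv) (unfold fin_sup_def Tsec_nth, rule exI[of _ "int n + 1"], auto)
qed (simp add: Tsec_high)

lemma Fop_high: "\<forall>j\<ge>6. w j = 0 \<Longrightarrow> \<forall>j\<ge>6. Fop \<beta> w j = 0"
  unfolding Fop_def thetaNabla_def by simp

lemma Fop_pow_high: "\<forall>j\<ge>6. w j = 0 \<Longrightarrow> \<forall>j\<ge>6. (Fop \<beta> ^^ N) w j = 0"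
  by (induction N) (auto dest: Fop_high)

lemma elementary_iff: "elementary 6 Astar \<beta> s \<longleftrightarrow> s \<in> Man 6 \<and> (\<exists>N. (Fop \<beta> ^^ N) s = (\<lambda>i. 0))"
proof -
  have "Fop \<beta> = (\<lambda>v i. thetaNabla 6 Astar v i - fls_const (of_rat \<beta>) * v i)"
    by (rule ext) (simp add: Fop_def)
  thus ?thesis unfolding elementary_def by simp
qed

lemma Tsec_elem:
  assumes k: "k < 6"
  shows "elementary 6 Astar (of_nat n + lam k) (Tsec k n)"
proof -
  define \<beta> where "\<beta> = of_nat n + lam k"
  define z where "z N l i = fls_nth (G ((Fop \<beta> ^^ N) (Tsec k n)) l) i" for N l i
  have zrec: "z (Suc N) l i = (of_int i - of_rat \<beta>) * z N l i + (\<Sum>m<6. NTc l m * z N m i)" if "l < 6" for N l i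
    unfolding z_def using G_F_nth[OF that] by simp
  have zr0: "z (Suc N) 0 i = (of_int i - of_rat \<beta> + 2) * z N 0 i"
     "z (Suc N) (Suc 0) i = (of_int i - of_rat \<beta>) * z N (Suc 0) i"
     "z (Suc N) (Suc (Suc 0)) i = (of_int i - of_rat \<beta>) * z N (Suc (Suc 0)) i - z N (Suc 0) i"
     "z (Suc N) (Suc (Suc (Suc 0))) i = (of_int i - of_rat \<beta>) * z N (Suc (Suc (Suc 0))) i - z N (Suc (Suc 0)) i"
     "z (Suc N) (Suc (Suc (Suc (Suc 0)))) i = (of_int i - of_rat \<beta>) * z N (Suc (Suc (Suc (Suc 0)))) i - z N (Suc (Suc (Suc 0))) i"
     "z (Suc N) (Suc (Suc (Suc (Suc (Suc 0))))) i = (of_int i - of_rat \<beta> - 2) * z N (Suc (Suc (Suc (Suc (Suc 0))))) i" for N i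
    by (simp_all add: zrec sum6 NTc_def algebra_simps eval_nat_numeral)
  note zr = zr0
  have z0: "z 0 l i = (if l = k \<and> i = int n then 1 else 0)" if "l < 6" for l i
    unfolding z_def using G_Tsec[OF k that] by auto
  have zoff: "z N l i = 0" if "i \<noteq> int n" "l < 6" for N l i
    using that(2)
  proof (induction N arbitrary: l)
    case 0 thus ?case using z0 that(1) by simp
  next
    case (Suc N) thus ?case using zrec by (simp add: Suc.IH)
  qed
  have c: "of_nat n - of_rat \<beta> = - (of_rat (lam k) :: complex)"
    unfolding \<beta>_def by (simp add: of_rat_add)
  have z4: "z 4 l (int n) = 0" if "l < 6" for l
  proof -
    have "k = 0 \<or> k = 1 \<or> k = 2 \<or> k = 3 \<or> k = 4 \<or> k = 5" using k by auto
    moreover have "l = 0 \<or> l = 1 \<or> l = 2 \<or> l = 3 \<or> l = 4 \<or> l = 5" using that by auto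
    ultimately show ?thesis using c z0
      by (auto simp: eval_nat_numeral zr lam_def)
  qed
  have "(Fop \<beta> ^^ 4) (Tsec k n) = (\<lambda>i. 0)"
  proof (rule G_inj)
    show "\<forall>j\<ge>6. (Fop \<beta> ^^ 4) (Tsec k n) j = 0" by (rule Fop_pow_high) (simp add: Tsec_high)
    show "\<forall>m<6. G ((Fop \<beta> ^^ 4) (Tsec k n)) m = G (\<lambda>i. 0) m"
    proof (intro allI impI)
      fix l :: nat assume l: "l < 6"
      show "G ((Fop \<beta> ^^ 4) (Tsec k n)) l = G (\<lambda>i. 0) l"
      proof (rule fls_eqI)
        fix i show "fls_nth (G ((Fop \<beta> ^^ 4) (Tsec k n)) l) i = fls_nth (G (\<lambda>i. 0) l) i"
          using z4[OF l] zoff[OF _ l, of i 4] unfolding z_def by (cases "i = int n") auto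
      qed
    qed
  qed simp
  thus ?thesis unfolding elementary_iff \<beta>_def using Tsec_Man by blast
qed

lemma poly_fin: "poly_fls f \<Longrightarrow> fin_sup f"
  unfolding poly_fls_def fin_sup_def by auto
lemma poly_vb: "poly_fls f \<Longrightarrow> vb f 0"
  unfolding poly_fls_def vb_def by auto

lemma fin_add: "fin_sup f \<Longrightarrow> fin_sup g \<Longrightarrow> fin_sup (f + g)"
  unfolding fin_sup_def by (metis (no_types, opaque_lifting) add.right_neutral fls_plus_nth max.boundedE nle_le)
lemma fin_sum: "(\<And>t. t \<in> S \<Longrightarrow> fin_sup (f t)) \<Longrightarrow> fin_sup (\<Sum>t\<in>S. f t)"
proof (induction S rule: infinite_finite_induct)
  case (empty) thus ?case by (simp add: fin_sup_def)
next
  case (insert x F) thus ?case by (simp add: fin_add)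
qed (simp add: fin_sup_def)
lemma fin_cmult: "fin_sup f \<Longrightarrow> fin_sup (fls_const c * f)"
  unfolding fin_sup_def by (auto simp: fls_mult_const_nth)
lemma fin_Xp: "fin_sup f \<Longrightarrow> fin_sup (fls_X ^ n * f)"
proof -
  assume "fin_sup f" then obtain M where "\<forall>i\<ge>M. fls_nth f i = 0" unfolding fin_sup_def by auto
  thus ?thesis unfolding fin_sup_def by (intro exI[of _ "M + int n"]) auto
qed
lemma fin_shift: "fin_sup f \<Longrightarrow> fin_sup (fls_shift m f)"
proof -
  assume "fin_sup f" then obtain M where "\<forall>i\<ge>M. fls_nth f i = 0" unfolding fin_sup_def by auto
  thus ?thesis unfolding fin_sup_def by (intro exI[of _ "M - m"]) auto
qed

lemma G_poly:
  assumes "v \<in> Emod 6"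
  shows "fin_sup (G v k) \<and> vb (G v k) 0"
proof -
  have p: "poly_fls (v j)" for j using assms unfolding Emod_def by auto
  have "fin_sup (G v k)" unfolding G_def
    by (rule fin_sum) (simp add: mult.assoc fin_cmult fin_Xp poly_fin[OF p])
  moreover have "vb (G v k) 0" unfolding G_def
  proof (rule vb_sum)
    fix j
    have "vb (fls_X ^ j * v j) 0" by (rule vb_mono[OF vb_Xp[OF poly_vb[OF p]]]) simp
    thus "vb (fls_const (Qc k j) * fls_X ^ j * v j) 0" by (simp add: mult.assoc vb_cmult)
  qed
  ultimately show ?thesis ..
qed

lemma G_vsum_Tsec:
  assumes "k < 6" "\<forall>t<6. nn t = 0"
  shows "G (vsum 6 c (\<lambda>t. Tsec t (nn t))) k = c k"
proof -
  have "G (vsum 6 c (\<lambda>t. Tsec t (nn t))) k = (\<Sum>t<6. c t * (if k = t then 1 else 0))"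
    unfolding G_vsum using assms by (intro sum.cong) (auto simp: G_Tsec)
  also have "\<dots> = c k" using assms(1) by (simp add: if_distrib cong: if_cong)
  finally show ?thesis .
qed

lemma G_vsum_Tsec':
  assumes "k < 6"
  shows "G (vsum 6 c (\<lambda>t. Tsec t (nn t))) k = c k * fls_X ^ nn k"
proof -
  have "G (vsum 6 c (\<lambda>t. Tsec t (nn t))) k = (\<Sum>t<6. if t = k then c k * fls_X ^ nn k else 0)"
    unfolding G_vsum using assms by (intro sum.cong) (auto simp: G_Tsec)
  also have "\<dots> = c k * fls_X ^ nn k" using assms(1) by simp
  finally show ?thesis .
qed

lemma vsum_Tsec_high: "j \<ge> 6 \<Longrightarrow> vsum m c (\<lambda>t. Tsec t (nn t)) j = 0"
  unfolding vsum_def by (simp add: Tsec_high)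

lemma V2:
  assumes v: "v \<in> Emod 6" and C: "Ccond v \<alpha>"
  shows "v \<in> Vfilt 6 Astar \<alpha>"
proof -
  define nn where "nn k = nat \<lceil>\<alpha> - lam k\<rceil>" for k
  define c where "c k = fls_shift (int (nn k)) (G v k)" for k
  have conv: "conv_ps (c k)" if k: "k < 6" for k
    unfolding conv_ps_iff
  proof
    show "conv_fls (c k)" unfolding c_def using G_poly[OF v] by (auto intro: fin_sup_conv fin_shift)
    show "vb (c k) 0" unfolding vb_def
    proof (intro allI impI)
      fix i :: int assume i: "of_int i < (0::rat)"
      show "fls_nth (c k) i = 0"
      proof (cases "i + int (nn k) < 0")
        case True thus ?thesis unfolding c_def using G_poly[OF v, of k] unfolding vb_def by simp
      next
        case False
        hence "i + int (nn k) < \<lceil>\<alpha> - lam k\<rceil>" using i unfolding nn_def by linarith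
        hence "of_int (i + int (nn k)) < \<alpha> - lam k" by (simp add: less_ceiling_iff)
        thus ?thesis unfolding c_def using C k unfolding Ccond_def vb_def by simp
      qed
    qed
  qed
  have elem: "\<exists>\<beta>\<ge>\<alpha>. elementary 6 Astar \<beta> (Tsec k (nn k))" if "k < 6" for k
  proof (intro exI conjI)
    show "elementary 6 Astar (of_nat (nn k) + lam k) (Tsec k (nn k))" by (rule Tsec_elem[OF that])
    have "\<alpha> - lam k \<le> of_int \<lceil>\<alpha> - lam k\<rceil>" by (rule le_of_int_ceiling)
    also have "\<dots> \<le> of_nat (nn k)" unfolding nn_def by simp
    finally show "\<alpha> \<le> of_nat (nn k) + lam k" by simp
  qed
  have eq: "v = vsum 6 c (\<lambda>t. Tsec t (nn t))"
  proof (rule G_inj)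
    show "\<forall>j\<ge>6. v j = 0" using v unfolding Emod_def by auto
    show "\<forall>j\<ge>6. vsum 6 c (\<lambda>t. Tsec t (nn t)) j = 0" by (simp add: vsum_Tsec_high)
    show "\<forall>k<6. G v k = G (vsum 6 c (\<lambda>t. Tsec t (nn t))) k"
      by (auto simp: G_vsum_Tsec' c_def fls_X_power_times_conv_shift)
  qed
  show ?thesis unfolding Vfilt_def using conv elem eq by blast
qed

lemma Fop0: "Fop 0 v = thetaNabla 6 Astar v"
  by (rule ext) (simp add: Fop_def)

lemma thetaNabla_high: "j \<ge> 6 \<Longrightarrow> thetaNabla 6 Astar v j = 0"
  unfolding thetaNabla_def by simp

lemma conv_ps_sum: "(\<And>t. t \<in> S \<Longrightarrow> conv_ps (f t)) \<Longrightarrow> conv_ps (\<Sum>t\<in>S. f t)"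
  unfolding conv_ps_iff by (auto intro!: conv_sum vb_sum)
lemma conv_ps_cmult: "conv_ps f \<Longrightarrow> conv_ps (fls_const c * f)"
  unfolding conv_ps_iff by (auto intro!: conv_cmult vb_cmult)
lemma conv_ps_add: "conv_ps f \<Longrightarrow> conv_ps g \<Longrightarrow> conv_ps (f + g)"
  unfolding conv_ps_iff by (auto intro!: conv_add vb_add)
lemma conv_ps_Xp: "conv_ps f \<Longrightarrow> conv_ps (fls_X ^ n * f)"
  unfolding conv_ps_iff by (auto intro!: conv_Xp intro: vb_mono[OF vb_Xp])
lemma conv_ps_Xderiv: "conv_ps f \<Longrightarrow> conv_ps (fls_X * fls_deriv f)"
  unfolding conv_ps_iff by (auto intro!: conv_X_deriv simp: vb_def)

lemma reg_sing: "regular_singular 6 Astar"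
proof -
  define gg where "gg = (\<lambda>t. Tsec t 0)"
  define L where "L = {vsum 6 c gg | c. \<forall>k<6. conv_ps (c k)}"
  have gg: "\<forall>k<6. gg k \<in> Man 6" unfolding gg_def by (simp add: Tsec_Man)
  have Gc: "G (vsum 6 c gg) k = c k" if "k < 6" for c k
    unfolding gg_def using G_vsum_Tsec[OF that, of "\<lambda>_. 0"] by simp
  have hi: "vsum 6 c gg j = 0" if "j \<ge> 6" for c j
    unfolding gg_def using vsum_Tsec_high[OF that, of 6 c "\<lambda>_. 0"] by simp
  have stab: "thetaNabla 6 Astar v \<in> L" if "v \<in> L" for v
  proof -
    obtain c where v: "v = vsum 6 c gg" and c: "\<forall>k<6. conv_ps (c k)" using \<open>v \<in> L\<close> unfolding L_def by auto
    define c' where "c' k = fls_X * fls_deriv (c k) + (\<Sum>l<6. fls_const (NTc k l) * c l)" for k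
    have "thetaNabla 6 Astar v = vsum 6 c' gg"
    proof (rule G_inj)
      show "\<forall>j\<ge>6. thetaNabla 6 Astar v j = 0" by (simp add: thetaNabla_high)
      show "\<forall>j\<ge>6. vsum 6 c' gg j = 0" by (simp add: hi)
      show "\<forall>k<6. G (thetaNabla 6 Astar v) k = G (vsum 6 c' gg) k"
      proof (intro allI impI)
        fix k :: nat assume k: "k < 6"
        show "G (thetaNabla 6 Astar v) k = G (vsum 6 c' gg) k"
        proof (rule fls_eqI)
          fix i
          have "fls_nth (G (thetaNabla 6 Astar v) k) i = of_int i * fls_nth (G v k) i + (\<Sum>l<6. NTc k l * fls_nth (G v l) i)"
            using G_F_nth[OF k, of 0 v i] by (simp add: Fop0)
          also have "\<dots> = of_int i * fls_nth (c k) i + (\<Sum>l<6. NTc k l * fls_nth (c l) i)"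
            unfolding v using Gc k by simp
          also have "\<dots> = fls_nth (G (vsum 6 c' gg) k) i"
            unfolding Gc[OF k] c'_def by (simp add: fls_sum_nth fls_mult_const_nth)
          finally show "fls_nth (G (thetaNabla 6 Astar v) k) i = fls_nth (G (vsum 6 c' gg) k) i" .
        qed
      qed
    qed
    moreover have "\<forall>k<6. conv_ps (c' k)" unfolding c'_def using c
      by (auto intro!: conv_ps_add conv_ps_Xderiv conv_ps_sum conv_ps_cmult)
    ultimately show ?thesis unfolding L_def by blast
  qed
  have exh: "\<exists>p::nat. smul (fls_X ^ p) v \<in> L" if v: "v \<in> Man 6" for v
  proof -
    define p where "p = (\<Sum>j<6. nat (- fls_subdegree (v j)))"
    define w where "w = smul (fls_X ^ p) v"
    have pj: "- fls_subdegree (v j) \<le> int p" if "j < 6" for j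
    proof -
      have "nat (- fls_subdegree (v j)) \<le> p" unfolding p_def
        by (rule member_le_sum) (use that in auto)
      thus ?thesis by linarith
    qed
    have wj: "conv_ps (w j)" if "j < 6" for j
      unfolding conv_ps_iff
    proof
      show "conv_fls (w j)" unfolding w_def smul_def using v unfolding Man_def by (auto intro: conv_Xp)
      show "vb (w j) 0" unfolding vb_def w_def smul_def
      proof (intro allI impI)
        fix i :: int assume "of_int i < (0::rat)"
        hence "i - int p < fls_subdegree (v j)" using pj[OF that] by linarith
        thus "fls_nth (fls_X ^ p * v j) i = 0" by simp
      qed
    qed
    define c where "c k = G w k" for k
    have "w = vsum 6 c gg"
    proof (rule G_inj)
      show "\<forall>j\<ge>6. w j = 0" using v unfolding w_def smul_def Man_def by auto
      show "\<forall>j\<ge>6. vsum 6 c gg j = 0" by (simp add: hi)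
      show "\<forall>k<6. G w k = G (vsum 6 c gg) k" by (simp add: Gc c_def)
    qed
    moreover have "conv_ps (c k)" for k unfolding c_def G_def
      by (rule conv_ps_sum) (simp add: mult.assoc conv_ps_cmult wj conv_ps_Xp)
    ultimately show ?thesis unfolding L_def w_def by blast
  qed
  show ?thesis unfolding regular_singular_def Let_def
    using gg stab exh unfolding L_def by blast
qed

abbreviation X :: "complex fls" where "X \<equiv> fls_X"

definition pm :: "nat \<Rightarrow> nat \<Rightarrow> complex fls" where
  "pm l j = (if l < 6 \<and> j < 6 then
     [[1, 4*X, 8*X^2, 16*X^3, 32*X^4, 64*X^5],
      [0, 1, 0, 0, 0, -32*X^4],
      [0, 0, 1, 0, 0, 16*X^3],
      [0, 0, 0, 1, 0, -8*X^2],
      [0, 0, 0, 0, 1, 4*X],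
      [0, 0, 0, 0, 0, 1]] ! l ! j else 0)"

definition pc :: "vec \<Rightarrow> nat \<Rightarrow> complex fls" where
  "pc v l = (\<Sum>j<6. pm l j * v j)"

definition sig :: "nat \<Rightarrow> vec" where
  "sig l j = (if l < 6 \<and> j < 6 then
     [[1, 0, 0, 0, 0, 0],
      [-4*X, 1, 0, 0, 0, 0],
      [-8*X^2, 0, 1, 0, 0, 0],
      [-16*X^3, 0, 0, 1, 0, 0],
      [-32*X^4, 0, 0, 0, 1, 0],
      [-64*X^5, 32*X^4, -16*X^3, 8*X^2, -4*X, 1]] ! l ! j else 0)"

lemma pc_explicit:
  "pc v 0 = v 0 + 4*X* v 1 + 8*X^2* v 2 + 16*X^3* v 3 + 32*X^4* v 4 + 64*X^5* v 5"
  "pc v 1 = v 1 - 32*X^4* v 5" "pc v 2 = v 2 + 16*X^3* v 5" "pc v 3 = v 3 - 8*X^2* v 5"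
  "pc v 4 = v 4 + 4*X* v 5" "pc v 5 = v 5"
  by (simp_all add: pc_def pm_def sum6)

lemma numc: "numeral n * (fls_const c * f) = fls_const (numeral n * c) * (f::complex fls)"
  "numeral n * fls_const c = fls_const (numeral n * c)"
  by (simp_all only: fls_const_numeral[symmetric] fls_const_mult_const mult.assoc[symmetric])

lemma G_explicit:
  "G v 0 = v 0"
  "2 * G v 1 = v 0 + 2*X* v 1"
  "4 * G v 2 = - v 0 + 4*X^2* v 2"
  "8 * G v 3 = v 0 + 8*X^3* v 3"
  "16 * G v 4 = - v 0 + 16*X^4* v 4"
  "64 * G v 5 = v 0 + 4*X* v 1 + 8*X^2* v 2 + 16*X^3* v 3 + 32*X^4* v 4 + 64*X^5* v 5"
  by (simp_all add: G_def sum6 Qc_def mult.assoc numc distrib_left)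

lemma GP0: "G v 0 = pc v 0 - 4*X*pc v 1 - 8*X^2*pc v 2 - 16*X^3*pc v 3 - 32*X^4*pc v 4 - 64*X^5*pc v 5"
  unfolding G_explicit pc_explicit by (simp add: algebra_simps flip: power_Suc power_add)
lemma GP1: "2 * G v 1 = pc v 0 - 2*X*pc v 1 - 8*X^2*pc v 2 - 16*X^3*pc v 3 - 32*X^4*pc v 4"
  unfolding G_explicit pc_explicit by (simp add: algebra_simps flip: power_Suc power_add)
lemma GP2: "4 * G v 2 = - pc v 0 + 4*X*pc v 1 + 12*X^2*pc v 2 + 16*X^3*pc v 3 + 32*X^4*pc v 4"
  unfolding G_explicit pc_explicit by (simp add: algebra_simps flip: power_Suc power_add)
lemma GP3: "8 * G v 3 = pc v 0 - 4*X*pc v 1 - 8*X^2*pc v 2 - 8*X^3*pc v 3 - 32*X^4*pc v 4"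
  unfolding G_explicit pc_explicit by (simp add: algebra_simps flip: power_Suc power_add)
lemma GP4: "16 * G v 4 = - pc v 0 + 4*X*pc v 1 + 8*X^2*pc v 2 + 16*X^3*pc v 3 + 48*X^4*pc v 4"
  unfolding G_explicit pc_explicit by (simp add: algebra_simps flip: power_Suc power_add)
lemma GP5: "64 * G v 5 = pc v 0"
  unfolding G_explicit pc_explicit by (simp add: algebra_simps flip: power_Suc power_add)
lemma PG0: "pc v 0 = 64 * G v 5"
  unfolding G_explicit pc_explicit by (simp add: algebra_simps flip: power_Suc power_add)
lemma PG1: "2*X*pc v 1 = 3*(2 * G v 1) - (64 * G v 5) + 2*(4 * G v 2) + 2*(8 * G v 3) + 2*(16 * G v 4)"
  unfolding G_explicit pc_explicit by (simp add: algebra_simps flip: power_Suc power_add)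
lemma PG2: "4*X^2*pc v 2 = -2*(2 * G v 1) + (64 * G v 5) - (4 * G v 2) - 2*(8 * G v 3) - 2*(16 * G v 4)"
  unfolding G_explicit pc_explicit by (simp add: algebra_simps flip: power_Suc power_add)
lemma PG3: "8*X^3*pc v 3 = 2*(2 * G v 1) - (64 * G v 5) + 2*(4 * G v 2) + 3*(8 * G v 3) + 2*(16 * G v 4)"
  unfolding G_explicit pc_explicit by (simp add: algebra_simps flip: power_Suc power_add)
lemma PG4: "16*X^4*pc v 4 = -2*(2 * G v 1) + (64 * G v 5) - 2*(4 * G v 2) - 2*(8 * G v 3) - (16 * G v 4)"
  unfolding G_explicit pc_explicit by (simp add: algebra_simps flip: power_Suc power_add)
lemma PG5: "64*X^5*pc v 5 = pc v 0 - G v 0 - 4*X*pc v 1 - 8*X^2*pc v 2 - 16*X^3*pc v 3 - 32*X^4*pc v 4"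
  unfolding G_explicit pc_explicit by (simp add: algebra_simps flip: power_Suc power_add)

lemma nth_num_mult: "fls_nth (numeral c * f) i = numeral c * fls_nth (f::complex fls) i"
  by (simp only: fls_const_numeral[symmetric] fls_mult_const_nth)

lemma vb_negnum: "vb f A \<Longrightarrow> vb (- numeral c * f) A"
  by (simp add: vb_uminus vb_numult)
lemma vb_num_cancel: "vb (numeral c * f) A \<Longrightarrow> vb f A"
  unfolding vb_def by (simp add: nth_num_mult)
lemma vb_tX: "vb g B \<Longrightarrow> A \<le> B + 1 \<Longrightarrow> vb (numeral c * X * g) A"
  unfolding vb_def by (auto simp: mult.assoc nth_num_mult)
lemma vb_tXp: "vb g B \<Longrightarrow> A \<le> B + of_nat n \<Longrightarrow> vb (numeral c * X ^ n * g) A"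
  unfolding vb_def by (auto simp: mult.assoc nth_num_mult)
lemma vb_tX_cancel: "vb (numeral c * X * g) A \<Longrightarrow> vb g (A - 1)"
  unfolding vb_def
proof (intro allI impI)
  fix i assume a: "\<forall>i. of_int i < A \<longrightarrow> fls_nth (numeral c * X * g) i = 0" and "of_int i < A - 1"
  hence "of_int (i + 1) < A" by simp
  with a have "fls_nth (numeral c * X * g) (i + 1) = 0" by blast
  thus "fls_nth g i = 0" by (simp add: mult.assoc nth_num_mult)
qed
lemma vb_tXp_cancel: "vb (numeral c * X ^ n * g) A \<Longrightarrow> vb g (A - of_nat n)"
  unfolding vb_def
proof (intro allI impI)
  fix i assume a: "\<forall>i. of_int i < A \<longrightarrow> fls_nth (numeral c * X ^ n * g) i = 0" and "of_int i < A - of_nat n"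
  hence "of_int (i + int n) < A" by simp
  with a have "fls_nth (numeral c * X ^ n * g) (i + int n) = 0" by blast
  thus "fls_nth g i = 0" by (simp add: mult.assoc nth_num_mult)
qed

definition alph :: "nat \<Rightarrow> rat" where "alph l = [-2,1,2,3,4,7] ! l"

definition Dcond :: "vec \<Rightarrow> rat \<Rightarrow> bool" where
  "Dcond v \<alpha> \<longleftrightarrow> (\<forall>l<6. vb (pc v l) (\<alpha> - alph l))"

lemma C_to_D: assumes "Ccond v \<alpha>" shows "Dcond v \<alpha>"
proof -
  have g: "vb (G v 0) (\<alpha> - 2)" "vb (G v 1) \<alpha>" "vb (G v 2) \<alpha>" "vb (G v 3) \<alpha>" "vb (G v 4) \<alpha>"
     "vb (G v 5) (\<alpha> + 2)"
  proof -
    have a: "vb (G v k) (\<alpha> - lam k)" if "k<6" for k using assms that unfolding Ccond_def by blast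
    show "vb (G v 0) (\<alpha> - 2)" using a[of 0] by (simp add: lam_def)
    show "vb (G v 1) \<alpha>" using a[of 1] by (simp add: lam_def)
    show "vb (G v 2) \<alpha>" using a[of 2] by (simp add: lam_def)
    show "vb (G v 3) \<alpha>" using a[of 3] by (simp add: lam_def)
    show "vb (G v 4) \<alpha>" using a[of 4] by (simp add: lam_def)
    show "vb (G v 5) (\<alpha> + 2)" using a[of 5] by (simp add: lam_def)
  qed
  have h: "vb (2 * G v 1) \<alpha>" "vb (4 * G v 2) \<alpha>" "vb (8 * G v 3) \<alpha>" "vb (16 * G v 4) \<alpha>"
     "vb (64 * G v 5) \<alpha>"
    using g by (auto intro!: vb_numult elim: vb_mono)
  have d0: "vb (pc v 0) (\<alpha> + 2)" unfolding PG0 using g(6) by (rule vb_numult)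
  have "vb (2*X*pc v 1) \<alpha>" unfolding PG1
    by (intro vb_add vb_diff; (rule h | (rule vb_numult vb_negnum, rule h)))
  hence d1: "vb (pc v 1) (\<alpha> - 1)" by (rule vb_tX_cancel)
  have "vb (4*X^2*pc v 2) \<alpha>" unfolding PG2
    by (intro vb_add vb_diff; (rule h | (rule vb_numult vb_negnum, rule h)))
  hence d2: "vb (pc v 2) (\<alpha> - 2)" using vb_tXp_cancel by fastforce
  have "vb (8*X^3*pc v 3) \<alpha>" unfolding PG3
    by (intro vb_add vb_diff; (rule h | (rule vb_numult vb_negnum, rule h)))
  hence d3: "vb (pc v 3) (\<alpha> - 3)" using vb_tXp_cancel by fastforce
  have "vb (16*X^4*pc v 4) \<alpha>" unfolding PG4
    by (intro vb_add vb_diff; (rule h | (rule vb_numult vb_negnum, rule h)))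
  hence d4: "vb (pc v 4) (\<alpha> - 4)" using vb_tXp_cancel by fastforce
  have "vb (64*X^5*pc v 5) (\<alpha> - 2)" unfolding PG5
    by (intro vb_add vb_diff vb_mono[OF d0] g(1) vb_tX[OF d1] vb_tXp[OF d2] vb_tXp[OF d3] vb_tXp[OF d4]) auto
  hence "vb (pc v 5) (\<alpha> - 2 - of_nat 5)" by (rule vb_tXp_cancel)
  hence d5: "vb (pc v 5) (\<alpha> - 7)" by simp
  show ?thesis unfolding Dcond_def
  proof (intro allI impI)
    fix l :: nat assume "l < 6"
    thus "vb (pc v l) (\<alpha> - alph l)" unfolding less6
      using d0 d1 d2 d3 d4 d5 by (auto simp: alph_def)
  qed
qed

lemma D_to_C: assumes "Dcond v \<alpha>" shows "Ccond v \<alpha>"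
proof -
  have d: "vb (pc v 0) (\<alpha> + 2)" "vb (pc v 1) (\<alpha> - 1)" "vb (pc v 2) (\<alpha> - 2)" "vb (pc v 3) (\<alpha> - 3)"
     "vb (pc v 4) (\<alpha> - 4)" "vb (pc v 5) (\<alpha> - 7)"
  proof -
    have a: "vb (pc v k) (\<alpha> - alph k)" if "k<6" for k using assms that unfolding Dcond_def by blast
    show "vb (pc v 0) (\<alpha> + 2)" using a[of 0] by (simp add: alph_def)
    show "vb (pc v 1) (\<alpha> - 1)" using a[of 1] by (simp add: alph_def)
    show "vb (pc v 2) (\<alpha> - 2)" using a[of 2] by (simp add: alph_def)
    show "vb (pc v 3) (\<alpha> - 3)" using a[of 3] by (simp add: alph_def)
    show "vb (pc v 4) (\<alpha> - 4)" using a[of 4] by (simp add: alph_def)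
    show "vb (pc v 5) (\<alpha> - 7)" using a[of 5] by (simp add: alph_def)
  qed
  have g0: "vb (G v 0) (\<alpha> - 2)" unfolding GP0
    by (intro vb_add vb_diff vb_mono[OF d(1)] vb_tX[OF d(2)] vb_tXp[OF d(3)] vb_tXp[OF d(4)]
       vb_tXp[OF d(5)] vb_tXp[OF d(6)]) auto
  have "vb (2 * G v 1) \<alpha>" unfolding GP1
    by (intro vb_add vb_diff vb_mono[OF d(1)] vb_tX[OF d(2)] vb_tXp[OF d(3)] vb_tXp[OF d(4)]
       vb_tXp[OF d(5)]) auto
  hence g1: "vb (G v 1) \<alpha>" by (rule vb_num_cancel)
  have "vb (4 * G v 2) \<alpha>" unfolding GP2
    by (intro vb_add vb_diff vb_uminus vb_mono[OF d(1)] vb_tX[OF d(2)] vb_tXp[OF d(3)] vb_tXp[OF d(4)]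
       vb_tXp[OF d(5)]) auto
  hence g2: "vb (G v 2) \<alpha>" by (rule vb_num_cancel)
  have "vb (8 * G v 3) \<alpha>" unfolding GP3
    by (intro vb_add vb_diff vb_mono[OF d(1)] vb_tX[OF d(2)] vb_tXp[OF d(3)] vb_tXp[OF d(4)]
       vb_tXp[OF d(5)]) auto
  hence g3: "vb (G v 3) \<alpha>" by (rule vb_num_cancel)
  have "vb (16 * G v 4) \<alpha>" unfolding GP4
    by (intro vb_add vb_diff vb_uminus vb_mono[OF d(1)] vb_tX[OF d(2)] vb_tXp[OF d(3)] vb_tXp[OF d(4)]
       vb_tXp[OF d(5)]) auto
  hence g4: "vb (G v 4) \<alpha>" by (rule vb_num_cancel)
  have "vb (64 * G v 5) (\<alpha> + 2)" unfolding GP5 by (rule d(1))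
  hence g5: "vb (G v 5) (\<alpha> + 2)" by (rule vb_num_cancel)
  show ?thesis unfolding Ccond_def
  proof (intro allI impI)
    fix k :: nat assume "k < 6"
    thus "vb (G v k) (\<alpha> - lam k)" unfolding less6
      using g0 g1 g2 g3 g4 g5 by (auto simp: lam_def)
  qed
qed

lemma memV: "v \<in> Emod 6 \<Longrightarrow> v \<in> Vfilt 6 Astar \<alpha> \<longleftrightarrow> Dcond v \<alpha>"
  using V1 C_to_D D_to_C V2 by blast

lemma pc_add: "pc (\<lambda>j. a j + b j) l = pc a l + pc b l"
  unfolding pc_def by (simp add: distrib_left sum.distrib)
lemma pc_diff: "pc (\<lambda>j. a j - b j) l = pc a l - pc b l"
  unfolding pc_def by (simp add: right_diff_distrib sum_subtractf)
lemma pc_scal: "pc (\<lambda>j. f * v j) l = f * pc v l"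
  unfolding pc_def by (simp add: sum_distrib_left mult.left_commute)
lemma pc_lin: "pc (\<lambda>j. \<Sum>t<6. f t * s t j) l = (\<Sum>t<6. f t * pc (s t) l)"
proof -
  have "pc (\<lambda>j. \<Sum>t<6. f t * s t j) l = (\<Sum>j<6. \<Sum>t<6. pm l j * (f t * s t j))"
    unfolding pc_def by (simp add: sum_distrib_left)
  also have "\<dots> = (\<Sum>t<6. \<Sum>j<6. pm l j * (f t * s t j))" by (rule sum.swap)
  also have "\<dots> = (\<Sum>t<6. f t * pc (s t) l)"
    unfolding pc_def by (simp add: sum_distrib_left mult.left_commute)
  finally show ?thesis .
qed
lemma sig_vals:
  "sig 0 0 = 1" "sig 0 1 = 0" "sig 0 2 = 0" "sig 0 3 = 0" "sig 0 4 = 0" "sig 0 5 = 0"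
  "sig 1 0 = -4*X" "sig 1 1 = 1" "sig 1 2 = 0" "sig 1 3 = 0" "sig 1 4 = 0" "sig 1 5 = 0"
  "sig 2 0 = -8*X^2" "sig 2 1 = 0" "sig 2 2 = 1" "sig 2 3 = 0" "sig 2 4 = 0" "sig 2 5 = 0"
  "sig 3 0 = -16*X^3" "sig 3 1 = 0" "sig 3 2 = 0" "sig 3 3 = 1" "sig 3 4 = 0" "sig 3 5 = 0"
  "sig 4 0 = -32*X^4" "sig 4 1 = 0" "sig 4 2 = 0" "sig 4 3 = 0" "sig 4 4 = 1" "sig 4 5 = 0"
  "sig 5 0 = -64*X^5" "sig 5 1 = 32*X^4" "sig 5 2 = -16*X^3" "sig 5 3 = 8*X^2" "sig 5 4 = -4*X" "sig 5 5 = 1"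
  by (simp_all add: sig_def)

lemma sig_high: "j \<ge> 6 \<Longrightarrow> sig l j = 0" unfolding sig_def by simp

lemma pc_sig_tab:
  "pc (sig 0) 0 = 1"
  "pc (sig 0) 1 = 0"
  "pc (sig 0) 2 = 0"
  "pc (sig 0) 3 = 0"
  "pc (sig 0) 4 = 0"
  "pc (sig 0) 5 = 0"
  "pc (sig 1) 0 = 0"
  "pc (sig 1) 1 = 1"
  "pc (sig 1) 2 = 0"
  "pc (sig 1) 3 = 0"
  "pc (sig 1) 4 = 0"
  "pc (sig 1) 5 = 0"
  "pc (sig 2) 0 = 0"
  "pc (sig 2) 1 = 0"
  "pc (sig 2) 2 = 1"
  "pc (sig 2) 3 = 0"
  "pc (sig 2) 4 = 0"
  "pc (sig 2) 5 = 0"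
  "pc (sig 3) 0 = 0"
  "pc (sig 3) 1 = 0"
  "pc (sig 3) 2 = 0"
  "pc (sig 3) 3 = 1"
  "pc (sig 3) 4 = 0"
  "pc (sig 3) 5 = 0"
  "pc (sig 4) 0 = 0"
  "pc (sig 4) 1 = 0"
  "pc (sig 4) 2 = 0"
  "pc (sig 4) 3 = 0"
  "pc (sig 4) 4 = 1"
  "pc (sig 4) 5 = 0"
  "pc (sig 5) 0 = 0"
  "pc (sig 5) 1 = 0"
  "pc (sig 5) 2 = 0"
  "pc (sig 5) 3 = 0"
  "pc (sig 5) 4 = 0"
  "pc (sig 5) 5 = 1"
  unfolding pc_explicit sig_vals by (simp_all add: algebra_simps flip: power_Suc power_add)

lemma pc_sig: assumes "l < 6" "l' < 6" shows "pc (sig l') l = (if l = l' then 1 else 0)"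
proof -
  have "l' = 0 \<or> l' = 1 \<or> l' = 2 \<or> l' = 3 \<or> l' = 4 \<or> l' = 5" using assms(2) by auto
  moreover have "l = 0 \<or> l = 1 \<or> l = 2 \<or> l = 3 \<or> l = 4 \<or> l = 5" using assms(1) by auto
  ultimately show ?thesis by (elim disjE) (simp_all only: pc_sig_tab, simp_all)
qed

lemma recon_tab:
  "(\<Sum>l<6. pc v l * sig l 0) = v 0" "(\<Sum>l<6. pc v l * sig l 1) = v 1"
  "(\<Sum>l<6. pc v l * sig l 2) = v 2" "(\<Sum>l<6. pc v l * sig l 3) = v 3"
  "(\<Sum>l<6. pc v l * sig l 4) = v 4" "(\<Sum>l<6. pc v l * sig l 5) = v 5"
  unfolding sum6 pc_explicit sig_vals by (simp_all add: algebra_simps flip: power_Suc power_add)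

lemma recon: assumes "\<forall>j\<ge>6. v j = 0" shows "v j = (\<Sum>l<6. pc v l * sig l j)"
proof (cases "j < 6")
  case True
  hence "j = 0 \<or> j = 1 \<or> j = 2 \<or> j = 3 \<or> j = 4 \<or> j = 5" by auto
  thus ?thesis by (elim disjE) (simp_all only: recon_tab)
qed (use assms in \<open>simp add: sig_high\<close>)

lemma poly_iff: "poly_fls f \<longleftrightarrow> vb f 0 \<and> fin_sup f"
  unfolding poly_fls_def vb_def fin_sup_def by auto

lemma nth_negnum_mult: "fls_nth (- numeral c * f) i = - numeral c * fls_nth (f::complex fls) i"
  by (simp add: nth_num_mult)

lemma mono_poly1: "poly_fls (numeral c * X ^ n)" "poly_fls (- numeral c * X ^ n)"
  unfolding poly_fls_def by (auto simp: nth_num_mult nth_negnum_mult intro!: exI[of _ "int n + 1"])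
lemma mono_poly2: "poly_fls (numeral c * X)" "poly_fls (- numeral c * X)"
  unfolding poly_fls_def by (auto simp: nth_num_mult nth_negnum_mult intro!: exI[of _ 2])
lemma mono_poly3: "poly_fls 0" "poly_fls 1"
  unfolding poly_fls_def by (auto intro!: exI[of _ 2])
lemmas mono_poly = mono_poly1 mono_poly2 mono_poly3

lemma pm_vals:
  "pm 0 0 = 1"
  "pm 0 1 = 4*X"
  "pm 0 2 = 8*X^2"
  "pm 0 3 = 16*X^3"
  "pm 0 4 = 32*X^4"
  "pm 0 5 = 64*X^5"
  "pm 1 0 = 0"
  "pm 1 1 = 1"
  "pm 1 2 = 0"
  "pm 1 3 = 0"
  "pm 1 4 = 0"
  "pm 1 5 = -32*X^4"
  "pm 2 0 = 0"
  "pm 2 1 = 0"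
  "pm 2 2 = 1"
  "pm 2 3 = 0"
  "pm 2 4 = 0"
  "pm 2 5 = 16*X^3"
  "pm 3 0 = 0"
  "pm 3 1 = 0"
  "pm 3 2 = 0"
  "pm 3 3 = 1"
  "pm 3 4 = 0"
  "pm 3 5 = -8*X^2"
  "pm 4 0 = 0"
  "pm 4 1 = 0"
  "pm 4 2 = 0"
  "pm 4 3 = 0"
  "pm 4 4 = 1"
  "pm 4 5 = 4*X"
  "pm 5 0 = 0"
  "pm 5 1 = 0"
  "pm 5 2 = 0"
  "pm 5 3 = 0"
  "pm 5 4 = 0"
  "pm 5 5 = 1"
  by (simp_all add: pm_def)

lemma sig_poly_tab:
  "poly_fls (sig 0 0)"
  "poly_fls (sig 0 1)"
  "poly_fls (sig 0 2)"
  "poly_fls (sig 0 3)"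
  "poly_fls (sig 0 4)"
  "poly_fls (sig 0 5)"
  "poly_fls (sig 1 0)"
  "poly_fls (sig 1 1)"
  "poly_fls (sig 1 2)"
  "poly_fls (sig 1 3)"
  "poly_fls (sig 1 4)"
  "poly_fls (sig 1 5)"
  "poly_fls (sig 2 0)"
  "poly_fls (sig 2 1)"
  "poly_fls (sig 2 2)"
  "poly_fls (sig 2 3)"
  "poly_fls (sig 2 4)"
  "poly_fls (sig 2 5)"
  "poly_fls (sig 3 0)"
  "poly_fls (sig 3 1)"
  "poly_fls (sig 3 2)"
  "poly_fls (sig 3 3)"
  "poly_fls (sig 3 4)"
  "poly_fls (sig 3 5)"
  "poly_fls (sig 4 0)"
  "poly_fls (sig 4 1)"
  "poly_fls (sig 4 2)"
  "poly_fls (sig 4 3)"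
  "poly_fls (sig 4 4)"
  "poly_fls (sig 4 5)"
  "poly_fls (sig 5 0)"
  "poly_fls (sig 5 1)"
  "poly_fls (sig 5 2)"
  "poly_fls (sig 5 3)"
  "poly_fls (sig 5 4)"
  "poly_fls (sig 5 5)"
  unfolding sig_vals by (simp_all only: mono_poly)

lemma pm_poly_tab:
  "poly_fls (pm 0 0)"
  "poly_fls (pm 0 1)"
  "poly_fls (pm 0 2)"
  "poly_fls (pm 0 3)"
  "poly_fls (pm 0 4)"
  "poly_fls (pm 0 5)"
  "poly_fls (pm 1 0)"
  "poly_fls (pm 1 1)"
  "poly_fls (pm 1 2)"
  "poly_fls (pm 1 3)"
  "poly_fls (pm 1 4)"
  "poly_fls (pm 1 5)"
  "poly_fls (pm 2 0)"
  "poly_fls (pm 2 1)"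
  "poly_fls (pm 2 2)"
  "poly_fls (pm 2 3)"
  "poly_fls (pm 2 4)"
  "poly_fls (pm 2 5)"
  "poly_fls (pm 3 0)"
  "poly_fls (pm 3 1)"
  "poly_fls (pm 3 2)"
  "poly_fls (pm 3 3)"
  "poly_fls (pm 3 4)"
  "poly_fls (pm 3 5)"
  "poly_fls (pm 4 0)"
  "poly_fls (pm 4 1)"
  "poly_fls (pm 4 2)"
  "poly_fls (pm 4 3)"
  "poly_fls (pm 4 4)"
  "poly_fls (pm 4 5)"
  "poly_fls (pm 5 0)"
  "poly_fls (pm 5 1)"
  "poly_fls (pm 5 2)"
  "poly_fls (pm 5 3)"
  "poly_fls (pm 5 4)"
  "poly_fls (pm 5 5)"
  unfolding pm_vals by (simp_all only: mono_poly)

lemma sig_poly: "poly_fls (sig l j)"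
proof (cases "l < 6 \<and> j < 6")
  case True
  hence "l = 0 \<or> l = 1 \<or> l = 2 \<or> l = 3 \<or> l = 4 \<or> l = 5" "j = 0 \<or> j = 1 \<or> j = 2 \<or> j = 3 \<or> j = 4 \<or> j = 5"
    by auto
  thus ?thesis by (elim disjE) (simp_all only: sig_poly_tab)
qed (auto simp: sig_def poly_fls_def)

lemma pm_poly: "poly_fls (pm l j)"
proof (cases "l < 6 \<and> j < 6")
  case True
  hence "l = 0 \<or> l = 1 \<or> l = 2 \<or> l = 3 \<or> l = 4 \<or> l = 5" "j = 0 \<or> j = 1 \<or> j = 2 \<or> j = 3 \<or> j = 4 \<or> j = 5"
    by auto
  thus ?thesis by (elim disjE) (simp_all only: pm_poly_tab)
qed (auto simp: pm_def poly_fls_def)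

lemma pc_vb: "v \<in> Emod 6 \<Longrightarrow> vb (pc v l) 0"
  unfolding pc_def
proof (rule vb_sum)
  fix j assume "v \<in> Emod 6"
  hence "vb (v j) 0" unfolding Emod_def by (auto simp: poly_iff)
  moreover have "vb (pm l j) 0" using pm_poly poly_iff by blast
  ultimately show "vb (pm l j * v j) 0" using vb_mult by fastforce
qed

lemma fin_uminus: "fin_sup f \<Longrightarrow> fin_sup (- f)"
  unfolding fin_sup_def by auto
lemma poly_add: "poly_fls f \<Longrightarrow> poly_fls g \<Longrightarrow> poly_fls (f + g)"
  unfolding poly_iff by (auto intro: vb_add fin_add)
lemma poly_diff: "poly_fls f \<Longrightarrow> poly_fls g \<Longrightarrow> poly_fls (f - g)"
  unfolding poly_iff using fin_add[OF _ fin_uminus] by (auto intro: vb_diff)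
lemma poly_cmult: "poly_fls f \<Longrightarrow> poly_fls (fls_const c * f)"
  unfolding poly_iff by (auto intro: vb_cmult fin_cmult)
lemma poly_sum: "(\<And>t. t \<in> S \<Longrightarrow> poly_fls (f t)) \<Longrightarrow> poly_fls (\<Sum>t\<in>S. f t)"
  unfolding poly_iff by (auto intro: vb_sum fin_sum)
lemma poly_zero: "poly_fls 0" unfolding poly_fls_def by auto
lemma poly_shift1: "poly_fls f \<Longrightarrow> vb f 1 \<Longrightarrow> poly_fls (fls_shift 1 f)"
  unfolding poly_iff by (auto intro: fin_shift simp: vb_def)

lemma sig_Emod: "sig l \<in> Emod 6"
  unfolding Emod_def by (auto simp: sig_high sig_poly)

lemma alph_inj: "l < 6 \<Longrightarrow> l' < 6 \<Longrightarrow> alph l = alph l' \<Longrightarrow> l = l'"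
  unfolding less6 by (auto simp: alph_def)

definition ia :: "nat \<Rightarrow> int" where "ia l = [-2,1,2,3,4,7] ! l"
lemma alph_ia: "l < 6 \<Longrightarrow> alph l = of_int (ia l)"
  unfolding less6 by (auto simp: alph_def ia_def)

lemma sig_in: assumes "l < 6" shows "sig l \<in> Vfilt 6 Astar (alph l)"
proof -
  have "Dcond (sig l) (alph l)" unfolding Dcond_def
  proof (intro allI impI)
    fix l' :: nat assume "l' < 6"
    hence e: "pc (sig l) l' = (if l' = l then 1 else 0)" using pc_sig assms by blast
    show "vb (pc (sig l) l') (alph l - alph l')" unfolding e vb_def by auto
  qed
  thus ?thesis using memV[OF sig_Emod] by blast
qed

definition Ys :: "rat \<Rightarrow> vec set" where
  "Ys \<alpha> = {(\<lambda>i. x i + y i) | x y. x \<in> Vfilt 6 Astar \<alpha> \<inter> thetaE 6 \<and> y \<in> Vgt 6 Astar \<alpha> \<inter> Emod 6}"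

lemma pc_sig_sum: assumes "l < 6"
  shows "pc (\<lambda>j. \<Sum>t<6. f t * sig t j) l = f l"
proof -
  have "pc (\<lambda>j. \<Sum>t<6. f t * sig t j) l = (\<Sum>t<6. f t * (if l = t then 1 else 0))"
    unfolding pc_lin using assms by (intro sum.cong) (auto simp: pc_sig)
  also have "\<dots> = f l" using assms by (simp add: if_distrib cong: if_cong)
  finally show ?thesis .
qed

lemma Emod_high: "v \<in> Emod 6 \<Longrightarrow> j \<ge> 6 \<Longrightarrow> v j = 0"
  unfolding Emod_def by auto

lemma spec_span:
  assumes xV: "x \<in> Vfilt 6 Astar \<alpha>" and xE: "x \<in> Emod 6"
  shows "(\<lambda>j. x j - (\<Sum>l<6. (if alph l = \<alpha> then fls_const (fls_nth (pc x l) 0) else 0) * sig l j)) \<in> Ys \<alpha>"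
proof -
  define cl where "cl l = fls_nth (pc x l) 0" for l
  have D: "Dcond x \<alpha>" using memV[OF xE] xV by blast
  have Dl: "vb (pc x l) (\<alpha> - alph l)" if "l < 6" for l using D that unfolding Dcond_def by blast
  have xp: "poly_fls (x j)" for j using xE unfolding Emod_def by auto
  define x1 where "x1 j = x j - (\<Sum>l<6. fls_const (cl l) * sig l j)" for j
  define y1 where "y1 j = (\<Sum>l<6. (if alph l = \<alpha> then 0 else fls_const (cl l)) * sig l j)" for j
  have eq: "(\<lambda>j. x j - (\<Sum>l<6. (if alph l = \<alpha> then fls_const (cl l) else 0) * sig l j)) = (\<lambda>j. x1 j + y1 j)"
  proof
    fix j
    have "(\<Sum>l<6. fls_const (cl l) * sig l j) = (\<Sum>l<6. (if alph l = \<alpha> then fls_const (cl l) else 0) * sig l j)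
        + (\<Sum>l<6. (if alph l = \<alpha> then 0 else fls_const (cl l)) * sig l j)"
      unfolding sum.distrib[symmetric] by (rule sum.cong) auto
    thus "x j - (\<Sum>l<6. (if alph l = \<alpha> then fls_const (cl l) else 0) * sig l j) = x1 j + y1 j"
      unfolding x1_def y1_def by (simp add: algebra_simps)
  qed
  have pcx1: "pc x1 l = pc x l - fls_const (cl l)" if "l < 6" for l
    unfolding x1_def[abs_def] pc_diff pc_sig_sum[OF that] ..
  have pcy1: "pc y1 l = (if alph l = \<alpha> then 0 else fls_const (cl l))" if "l < 6" for l
    unfolding y1_def[abs_def] pc_sig_sum[OF that] ..
  have x1hi: "\<forall>j\<ge>6. x1 j = 0" unfolding x1_def using xE by (simp add: Emod_high sig_high)
  have y1hi: "\<forall>j\<ge>6. y1 j = 0" unfolding y1_def by (simp add: sig_high)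
  have x1E: "x1 \<in> Emod 6" unfolding Emod_def
    using x1hi by (auto simp: x1_def intro!: poly_diff xp poly_sum poly_cmult sig_poly)
  have y1E: "y1 \<in> Emod 6" unfolding Emod_def
    using y1hi by (auto simp: y1_def intro!: poly_sum poly_cmult sig_poly simp: poly_zero)
  have x1V: "x1 \<in> Vfilt 6 Astar \<alpha>"
  proof -
    have "Dcond x1 \<alpha>" unfolding Dcond_def
    proof (intro allI impI)
      fix l :: nat assume l: "l < 6"
      have "fls_nth (pc x l) 0 = 0 \<or> \<alpha> - alph l \<le> 0"
        using Dl[OF l] unfolding vb_def by force
      hence "vb (fls_const (cl l)) (\<alpha> - alph l)" unfolding cl_def by (rule vb_const)
      thus "vb (pc x1 l) (\<alpha> - alph l)" unfolding pcx1[OF l] by (intro vb_diff Dl l)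
    qed
    thus ?thesis using memV[OF x1E] by blast
  qed
  have x1T: "x1 \<in> thetaE 6"
  proof -
    define x2 where "x2 j = fls_shift 1 (x1 j)" for j
    have vb1: "vb (x1 j) 1" for j
    proof -
      have "x1 j = (\<Sum>l<6. pc x1 l * sig l j)" by (rule recon[OF x1hi])
      also have "vb \<dots> (1 + 0)"
      proof (rule vb_sum)
        fix l :: nat assume "l \<in> {..<6}"
        hence l: "l < 6" by simp
        have "vb (pc x1 l) 1" unfolding vb_def
        proof (intro allI impI)
          fix i :: int assume "of_int i < (1::rat)"
          hence "i < 0 \<or> i = 0" by linarith
          thus "fls_nth (pc x1 l) i = 0"
          proof
            assume "i < 0" thus ?thesis using pc_vb[OF xE, of l] unfolding pcx1[OF l] vb_def by simp
          qed (simp add: pcx1[OF l] cl_def)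
        qed
        moreover have "vb (sig l j) 0" using sig_poly poly_iff by blast
        ultimately show "vb (pc x1 l * sig l j) (1 + 0)" by (rule vb_mult)
      qed
      finally show ?thesis by simp
    qed
    have "x2 \<in> Emod 6" unfolding Emod_def
    proof (safe)
      fix j show "poly_fls (x2 j)" unfolding x2_def
        by (rule poly_shift1[OF _ vb1]) (use x1E in \<open>auto simp: Emod_def\<close>)
    qed (simp add: x2_def x1hi)
    moreover have "x1 = smul fls_X x2"
    proof
      fix j show "x1 j = smul fls_X x2 j"
        unfolding smul_def x2_def by (rule fls_eqI) simp
    qed
    ultimately show ?thesis unfolding thetaE_def by blast
  qed
  have y1G: "y1 \<in> Vgt 6 Astar \<alpha>"
  proof -
    define \<beta> where "\<beta> = of_int \<lfloor>\<alpha>\<rfloor> + (1::rat)"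
    have b: "\<beta> > \<alpha>" unfolding \<beta>_def by linarith
    have "Dcond y1 \<beta>" unfolding Dcond_def
    proof (intro allI impI)
      fix l :: nat assume l: "l < 6"
      show "vb (pc y1 l) (\<beta> - alph l)"
      proof (cases "alph l = \<alpha>")
        case True thus ?thesis unfolding pcy1[OF l] by simp
      next
        case False
        have "fls_nth (pc x l) 0 = 0 \<or> \<beta> - alph l \<le> 0"
        proof (cases "\<beta> - alph l \<le> 0")
          case False
          hence "of_int (ia l) < \<beta>" using alph_ia[OF l] by simp
          hence "ia l < \<lfloor>\<alpha>\<rfloor> + 1" unfolding \<beta>_def by linarith
          hence "ia l \<le> \<lfloor>\<alpha>\<rfloor>" by simp
          hence "rat_of_int (ia l) \<le> \<alpha>" using of_int_floor_le[of \<alpha>] by (meson of_int_le_iff order_trans)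
          hence "alph l \<le> \<alpha>" using alph_ia[OF l] by simp
          with \<open>alph l \<noteq> \<alpha>\<close> have "0 < \<alpha> - alph l" by simp
          thus ?thesis using Dl[OF l] unfolding vb_def by force
        qed simp
        hence "vb (fls_const (cl l)) (\<beta> - alph l)" unfolding cl_def by (rule vb_const)
        thus ?thesis unfolding pcy1[OF l] using False by simp
      qed
    qed
    hence "y1 \<in> Vfilt 6 Astar \<beta>" using memV[OF y1E] by blast
    thus ?thesis unfolding Vgt_def using b by blast
  qed
  show ?thesis unfolding eq[unfolded cl_def] Ys_def using x1V x1T y1G y1E by blast
qed

lemma pc_smul: "pc (smul f v) l = f * pc v l"
  unfolding smul_def by (rule pc_scal)

lemma spec_indep:
  assumes l0: "l0 < 6" and a: "alph l0 = \<alpha>" and w: "(\<lambda>j. fls_const c * sig l0 j) \<in> Ys \<alpha>"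
  shows "c = 0"
proof -
  obtain x y where e: "(\<lambda>j. fls_const c * sig l0 j) = (\<lambda>i. x i + y i)"
    and x: "x \<in> thetaE 6" and yV: "y \<in> Vgt 6 Astar \<alpha>" and yE: "y \<in> Emod 6"
    using w unfolding Ys_def by blast
  have "pc (\<lambda>j. fls_const c * sig l0 j) l0 = fls_const c"
    unfolding pc_scal using pc_sig[OF l0 l0] by simp
  hence "fls_const c = pc x l0 + pc y l0" unfolding e pc_add by simp
  hence c: "c = fls_nth (pc x l0) 0 + fls_nth (pc y l0) 0"
    by (metis fls_const_nth fls_plus_nth)
  obtain x2 where x2: "x2 \<in> Emod 6" "x = smul fls_X x2" using x unfolding thetaE_def by blast
  have "fls_nth (pc x l0) 0 = 0"
    unfolding x2(2) pc_smul using pc_vb[OF x2(1), of l0] unfolding vb_def by simp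
  moreover have "fls_nth (pc y l0) 0 = 0"
  proof -
    obtain \<beta> where b: "\<beta> > \<alpha>" "y \<in> Vfilt 6 Astar \<beta>" using yV unfolding Vgt_def by blast
    hence "Dcond y \<beta>" using memV[OF yE] by blast
    hence "vb (pc y l0) (\<beta> - alph l0)" using l0 unfolding Dcond_def by blast
    thus ?thesis using b a unfolding vb_def by force
  qed
  ultimately show ?thesis using c by simp
qed

lemma vsum1: "vsum 1 (\<lambda>k. fls_const (c k)) (\<lambda>k. [s] ! k) = (\<lambda>i. fls_const (c 0) * s i)"
  unfolding vsum_def by simp
lemma vsum0: "vsum 0 c s = (\<lambda>i. 0)"
  unfolding vsum_def by simp

lemma spec_yes: assumes l0: "l0 < 6" shows "spectrum_mult 6 Astar (alph l0) 1"
  unfolding spectrum_mult_def quot_dim_def Ys_def[symmetric]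
proof (intro exI[of _ "[sig l0]"] conjI allI impI ballI)
  show "length [sig l0] = 1" by simp
  show "set [sig l0] \<subseteq> Vfilt 6 Astar (alph l0) \<inter> Emod 6" using sig_in[OF l0] sig_Emod by simp
  fix c :: "nat \<Rightarrow> complex"
  assume "vsum 1 (\<lambda>k. fls_const (c k)) (\<lambda>k. [sig l0] ! k) \<in> Ys (alph l0)"
  hence "c 0 = 0" unfolding vsum1 by (rule spec_indep[OF l0 refl])
  thus "\<And>k. k < 1 \<Longrightarrow> c k = 0" by simp
next
  fix x assume x: "x \<in> Vfilt 6 Astar (alph l0) \<inter> Emod 6"
  have sp: "(\<lambda>j. x j - (\<Sum>l<6. (if alph l = alph l0 then fls_const (fls_nth (pc x l) 0) else 0) * sig l j))
      \<in> Ys (alph l0)" using spec_span x by blast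
  have "(\<Sum>l<6. (if alph l = alph l0 then fls_const (fls_nth (pc x l) 0) else 0) * sig l j)
       = fls_const (fls_nth (pc x l0) 0) * sig l0 j" for j
  proof -
    have "(\<Sum>l<6. (if alph l = alph l0 then fls_const (fls_nth (pc x l) 0) else 0) * sig l j)
       = (\<Sum>l<6. if l = l0 then fls_const (fls_nth (pc x l0) 0) * sig l0 j else 0)"
      by (rule sum.cong) (use alph_inj l0 in auto)
    also have "\<dots> = fls_const (fls_nth (pc x l0) 0) * sig l0 j" using l0 by simp
    finally show ?thesis .
  qed
  hence "(\<lambda>i. x i - vsum 1 (\<lambda>k. fls_const ((\<lambda>_. fls_nth (pc x l0) 0) k)) (\<lambda>k. [sig l0] ! k) i) \<in> Ys (alph l0)"
    using sp unfolding vsum1 by simp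
  thus "\<exists>c. (\<lambda>i. x i - vsum 1 (\<lambda>k. fls_const (c k)) (\<lambda>k. [sig l0] ! k) i) \<in> Ys (alph l0)"
    by (rule exI[of _ "\<lambda>_. fls_nth (pc x l0) 0"])
qed

lemma spec_no: assumes n: "\<forall>l<6. alph l \<noteq> \<alpha>" shows "spectrum_mult 6 Astar \<alpha> 0"
  unfolding spectrum_mult_def quot_dim_def Ys_def[symmetric]
proof (intro exI[of _ "[]"] conjI allI impI ballI)
  fix x assume x: "x \<in> Vfilt 6 Astar \<alpha> \<inter> Emod 6"
  have sp: "(\<lambda>j. x j - (\<Sum>l<6. (if alph l = \<alpha> then fls_const (fls_nth (pc x l) 0) else 0) * sig l j))
      \<in> Ys \<alpha>" using spec_span x by blast
  have "(\<Sum>l<6. (if alph l = \<alpha> then fls_const (fls_nth (pc x l) 0) else 0) * sig l j) = 0" for j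
    using n by (intro sum.neutral) auto
  hence "(\<lambda>i. x i - vsum 0 (\<lambda>k. fls_const ((\<lambda>_. 0) k)) (\<lambda>k. [] ! k) i) \<in> Ys \<alpha>"
    using sp unfolding vsum0 by simp
  thus "\<exists>c. (\<lambda>i. x i - vsum 0 (\<lambda>k. fls_const (c k)) (\<lambda>k. [] ! k) i) \<in> Ys \<alpha>"
    by (rule exI[of _ "\<lambda>_. 0"])
qed auto

theorem mainTheorem11:
  shows "regular_singular 6 Astar \<and>
         (\<forall>\<alpha>::rat. spectrum_mult 6 Astar \<alpha> (count {#-2, 1, 2, 3, 4, 7#} \<alpha>))"
proof (intro conjI allI)
  show "regular_singular 6 Astar" by (rule reg_sing)
  fix \<alpha> :: rat
  have av: "alph 0 = -2" "alph 1 = 1" "alph 2 = 2" "alph 3 = 3" "alph 4 = 4" "alph 5 = 7"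
    by (simp_all add: alph_def)
  show "spectrum_mult 6 Astar \<alpha> (count {#-2, 1, 2, 3, 4, 7#} \<alpha>)"
  proof (cases "\<alpha> \<in> {-2, 1, 2, 3, 4, 7}")
    case True
    hence "count {#-2, 1, 2, 3, 4, 7#} \<alpha> = 1" by auto
    moreover obtain l0 where "l0 < 6" "alph l0 = \<alpha>"
    proof -
      from True have "\<alpha> = alph 0 \<or> \<alpha> = alph 1 \<or> \<alpha> = alph 2 \<or> \<alpha> = alph 3 \<or> \<alpha> = alph 4 \<or> \<alpha> = alph 5"
        by (auto simp: alph_def)
      thus ?thesis using that[of 0] that[of 1] that[of 2] that[of 3] that[of 4] that[of 5] by auto
    qed
    ultimately show ?thesis using spec_yes by metis
  next
    case False
    hence "count {#-2, 1, 2, 3, 4, 7#} \<alpha> = 0" by auto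
    moreover have "\<forall>l<6. alph l \<noteq> \<alpha>" using False unfolding less6 by (auto simp: alph_def)
    ultimately show ?thesis using spec_no by simp
  qed
qed

end
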